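(* Let $H,K$ be Hilbert spaces, $m\geq 1$, and let $x_{1},\dots,x_{m}\in B(H)$ and $y_{1},\dots,y_{m}\in B(K)$ be self-adjoint contractions. Set $B=\sum_{i=1}^{m}x_{i}\otimes y_{i}\in B(H\otimes K)$. Then \[ \|B\|^{2}\leq m+\frac{1}{2}\sum_{1\leq i<j\leq m}\Big(\|[x_{i},x_{j}]\|\,\|[y_{i},y_{j}]\|+\|\{x_{i},x_{j}\}\|\,\|\{y_{i},y_{j}\}\|\Big). \] In particular, if for each pair $(i,j)$ either $\{x_{i},x_{j}\}=0$ or $\{y_{i},y_{j}\}=0$, then \[ \|B\|^{2}\leq m+\frac{1}{2}\sum_{i<j}\|[x_{i},x_{j}]\|\,\|[y_{i},y_{j}]\|. \]
   Context: $\|\cdot\|$ denotes the operator norm. $[a,b]=ab-ba$ is the commutator and $\{a,b\}=ab+ba$ the anticommutator. A contraction is an operator of norm at most $1$. *)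

theory Defs
  imports "HOL-Analysis.Analysis"
begin

text \<open>A complex Hilbert space is modelled concretely as l2(I) for an index type I
  (every complex Hilbert space is unitarily isomorphic to such a space, I being an
  orthonormal basis).
  The Hilbert tensor product l2(I) tensor l2(J) is l2(I x J).\<close>

definition l2 :: "('i \<Rightarrow> complex) set" where
  "l2 = {f. (\<lambda>i. (cmod (f i))\<^sup>2) summable_on UNIV}"

definition l2_inner :: "('i \<Rightarrow> complex) \<Rightarrow> ('i \<Rightarrow> complex) \<Rightarrow> complex" where
  "l2_inner f g = infsum (\<lambda>i. cnj (f i) * g i) UNIV"

definition l2_norm :: "('i \<Rightarrow> complex) \<Rightarrow> real" where
  "l2_norm f = sqrt (infsum (\<lambda>i. (cmod (f i))\<^sup>2) UNIV)"

text \<open>Operators on l2(I): only their action on l2(I) is relevant.\<close>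
type_synonym 'i op = "('i \<Rightarrow> complex) \<Rightarrow> ('i \<Rightarrow> complex)"

definition bounded_op :: "'i op \<Rightarrow> bool" where
  "bounded_op x \<longleftrightarrow>
     (\<forall>f\<in>l2. x f \<in> l2) \<and>
     (\<forall>f\<in>l2. \<forall>g\<in>l2. x (\<lambda>i. f i + g i) = (\<lambda>i. x f i + x g i)) \<and>
     (\<forall>f\<in>l2. \<forall>c. x (\<lambda>i. c * f i) = (\<lambda>i. c * x f i)) \<and>
     (\<exists>C. \<forall>f\<in>l2. l2_norm (x f) \<le> C * l2_norm f)"

definition op_norm :: "'i op \<Rightarrow> real" where
  "op_norm x = Sup {l2_norm (x f) | f. f \<in> l2 \<and> l2_norm f \<le> 1}"

definition self_adjoint :: "'i op \<Rightarrow> bool" where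
  "self_adjoint x \<longleftrightarrow> bounded_op x \<and>
     (\<forall>f\<in>l2. \<forall>g\<in>l2. l2_inner (x f) g = l2_inner f (x g))"

definition contraction :: "'i op \<Rightarrow> bool" where
  "contraction x \<longleftrightarrow> bounded_op x \<and> op_norm x \<le> 1"

text \<open>x tensor 1 and 1 tensor y on l2(I x J); x tensor y is their composition.\<close>
definition left_ext :: "'i op \<Rightarrow> ('i \<times> 'j) op" where
  "left_ext x F = (\<lambda>(i, j). x (\<lambda>k. F (k, j)) i)"

definition right_ext :: "'j op \<Rightarrow> ('i \<times> 'j) op" where
  "right_ext y F = (\<lambda>(i, j). y (\<lambda>l. F (i, l)) j)"

definition tensor_op :: "'i op \<Rightarrow> 'j op \<Rightarrow> ('i \<times> 'j) op" where
  "tensor_op x y = left_ext x \<circ> right_ext y"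

definition commutator :: "'i op \<Rightarrow> 'i op \<Rightarrow> 'i op" where
  "commutator a b = (\<lambda>f i. a (b f) i - b (a f) i)"

definition anticommutator :: "'i op \<Rightarrow> 'i op \<Rightarrow> 'i op" where
  "anticommutator a b = (\<lambda>f i. a (b f) i + b (a f) i)"

definition op_sum :: "nat \<Rightarrow> (nat \<Rightarrow> 'i op) \<Rightarrow> 'i op" where
  "op_sum m A = (\<lambda>f p. \<Sum>k<m. A k f p)"

end

theory Submission
  imports Defs
begin


lemma sq_le2: "((a::real) + b)\<^sup>2 \<le> 2 * a\<^sup>2 + 2 * b\<^sup>2"
proof -
  have "(a+b)\<^sup>2 + (a-b)\<^sup>2 = 2*a\<^sup>2+2*b\<^sup>2" by (simp add: power2_eq_square algebra_simps)
  moreover have "(a-b)\<^sup>2 \<ge> 0" by simp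
  ultimately show ?thesis by linarith
qed

lemma prod_le_sq: "(a::real) * b \<le> (a\<^sup>2 + b\<^sup>2) / 2"
  using sum_squares_bound[of a b] by (simp add: field_simps)

lemma l2_summ: "f \<in> l2 \<Longrightarrow> (\<lambda>i. (cmod (f i))\<^sup>2) summable_on UNIV"
  by (simp add: l2_def)

lemma l2_norm_nonneg: "l2_norm f \<ge> 0"
  unfolding l2_norm_def by (simp add: infsum_nonneg)

lemma l2_norm_sq: "(l2_norm f)\<^sup>2 = infsum (\<lambda>i. (cmod (f i))\<^sup>2) UNIV"
  unfolding l2_norm_def by (simp add: infsum_nonneg)

lemma l2_zero[simp]: "(\<lambda>_. 0) \<in> l2" "l2_norm (\<lambda>_. 0) = 0"
  by (auto simp: l2_def l2_norm_def)

lemma l2_norm_eq0: assumes "f \<in> l2" "l2_norm f = 0" shows "f = (\<lambda>_. 0)"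
proof
  fix i
  have "infsum (\<lambda>i. (cmod (f i))\<^sup>2) UNIV \<le> 0" using assms(2) l2_norm_sq[of f] by simp
  hence "(cmod (f i))\<^sup>2 = 0"
    by (rule nonneg_infsum_le_0D) (use assms(1) l2_summ in auto)
  thus "f i = 0" by simp
qed

lemma l2_scale: assumes "f \<in> l2"
  shows "(\<lambda>i. c * f i) \<in> l2" "l2_norm (\<lambda>i. c * f i) = cmod c * l2_norm f"
proof -
  have e: "(\<lambda>i. (cmod (c * f i))\<^sup>2) = (\<lambda>i. (cmod c)\<^sup>2 * (cmod (f i))\<^sup>2)"
    by (simp add: norm_mult power_mult_distrib)
  show "(\<lambda>i. c * f i) \<in> l2" unfolding l2_def using summable_on_cmult_right[OF l2_summ[OF assms]] e by simp
  have "(l2_norm (\<lambda>i. c * f i))\<^sup>2 = (cmod c * l2_norm f)\<^sup>2"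
    unfolding l2_norm_sq e power_mult_distrib by (simp add: infsum_cmult_right')
  thus "l2_norm (\<lambda>i. c * f i) = cmod c * l2_norm f"
    by (simp add: l2_norm_nonneg power2_eq_iff_nonneg)
qed

lemma l2_add: assumes "f \<in> l2" "g \<in> l2" shows "(\<lambda>i. f i + g i) \<in> l2"
proof -
  have "(\<lambda>i. 2 * (cmod (f i))\<^sup>2 + 2 * (cmod (g i))\<^sup>2) summable_on UNIV"
    using assms by (intro summable_on_add summable_on_cmult_right l2_summ)
  moreover have "(cmod (f i + g i))\<^sup>2 \<le> 2 * (cmod (f i))\<^sup>2 + 2 * (cmod (g i))\<^sup>2" for i
  proof -
    have "cmod (f i + g i) \<le> cmod (f i) + cmod (g i)" by (rule norm_triangle_ineq)
    hence "(cmod (f i + g i))\<^sup>2 \<le> (cmod (f i) + cmod (g i))\<^sup>2" by (simp add: power_mono)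
    also have "\<dots> \<le> 2 * (cmod (f i))\<^sup>2 + 2 * (cmod (g i))\<^sup>2"
      by (rule sq_le2)
    finally show ?thesis .
  qed
  ultimately have "(\<lambda>i. (cmod (f i + g i))\<^sup>2) summable_on UNIV"
    by (rule summable_on_comparison_test) auto
  thus ?thesis unfolding l2_def by simp
qed

lemma l2_uminus: "f \<in> l2 \<Longrightarrow> (\<lambda>i. - f i) \<in> l2"
  using l2_scale(1)[of f "-1"] by simp

lemma l2_diff: "f \<in> l2 \<Longrightarrow> g \<in> l2 \<Longrightarrow> (\<lambda>i. f i - g i) \<in> l2"
  using l2_add[of f "\<lambda>i. - g i"] l2_uminus[of g] by simp

lemma l2_sum: "finite A \<Longrightarrow> (\<And>k. k \<in> A \<Longrightarrow> F k \<in> l2) \<Longrightarrow> (\<lambda>p. \<Sum>k\<in>A. F k p) \<in> l2"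
  by (induction A rule: finite_induct) (auto intro: l2_add)

lemma l2_prod_summ: assumes "f \<in> l2" "g \<in> l2"
  shows "(\<lambda>i. cmod (f i) * cmod (g i)) summable_on UNIV"
proof -
  have "(\<lambda>i. (cmod (f i))\<^sup>2 + (cmod (g i))\<^sup>2) summable_on UNIV"
    using assms by (intro summable_on_add l2_summ)
  moreover have "cmod (f i) * cmod (g i) \<le> (cmod (f i))\<^sup>2 + (cmod (g i))\<^sup>2" for i
  proof -
    have "2 * (cmod (f i) * cmod (g i)) \<le> (cmod (f i))\<^sup>2 + (cmod (g i))\<^sup>2"
      using sum_squares_bound[of "cmod (f i)" "cmod (g i)"] by (simp add: mult.assoc)
    moreover have "0 \<le> cmod (f i) * cmod (g i)" by simp
    ultimately show ?thesis by linarith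
  qed
  ultimately show ?thesis by (rule summable_on_comparison_test) auto
qed

lemma l2_prod_bound: assumes "f \<in> l2" "g \<in> l2"
  shows "infsum (\<lambda>i. cmod (f i) * cmod (g i)) UNIV \<le> l2_norm f * l2_norm g"
proof (cases "l2_norm f = 0 \<or> l2_norm g = 0")
  case True
  then show ?thesis using l2_norm_eq0[OF assms(1)] l2_norm_eq0[OF assms(2)] by auto
next
  case False
  define a where "a = l2_norm f"
  define b where "b = l2_norm g"
  have a: "a > 0" using False l2_norm_nonneg[of f] unfolding a_def by linarith
  have b: "b > 0" using False l2_norm_nonneg[of g] unfolding b_def by linarith
  define A where "A = (\<lambda>i. (cmod (f i))\<^sup>2)"
  define B where "B = (\<lambda>i. (cmod (g i))\<^sup>2)"
  have sA: "A summable_on UNIV" unfolding A_def using assms(1) by (rule l2_summ)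
  have sB: "B summable_on UNIV" unfolding B_def using assms(2) by (rule l2_summ)
  have sA': "(\<lambda>i. (1/a\<^sup>2) * A i) summable_on UNIV" using sA by (rule summable_on_cmult_right)
  have sB': "(\<lambda>i. (1/b\<^sup>2) * B i) summable_on UNIV" using sB by (rule summable_on_cmult_right)
  have "infsum (\<lambda>i. (1/(a*b)) * (cmod (f i) * cmod (g i))) UNIV
      \<le> infsum (\<lambda>i. (1/2) * ((1/a\<^sup>2) * A i + (1/b\<^sup>2) * B i)) UNIV"
  proof (rule infsum_mono)
    show "(\<lambda>i. (1/(a*b)) * (cmod (f i) * cmod (g i))) summable_on UNIV"
      using l2_prod_summ[OF assms] by (rule summable_on_cmult_right)
    show "(\<lambda>i. (1/2) * ((1/a\<^sup>2) * A i + (1/b\<^sup>2) * B i)) summable_on UNIV"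
      by (rule summable_on_cmult_right, rule summable_on_add[OF sA' sB'])
    fix i
    have "cmod (f i) / a * (cmod (g i) / b) \<le> ((cmod (f i) / a)\<^sup>2 + (cmod (g i) / b)\<^sup>2) / 2"
      by (rule prod_le_sq)
    thus "(1/(a*b)) * (cmod (f i) * cmod (g i)) \<le> (1/2) * ((1/a\<^sup>2) * A i + (1/b\<^sup>2) * B i)"
      unfolding A_def B_def by (simp add: power_divide)
  qed
  also have "\<dots> = (1/2) * ((1/a\<^sup>2) * infsum A UNIV + (1/b\<^sup>2) * infsum B UNIV)"
    by (simp only: infsum_cmult_right' infsum_add[OF sA' sB'])
  also have "\<dots> = 1" using a b unfolding a_def b_def A_def B_def l2_norm_sq[symmetric] by simp
  finally have "(1/(a*b)) * infsum (\<lambda>i. cmod (f i) * cmod (g i)) UNIV \<le> 1"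
    by (simp only: infsum_cmult_right')
  thus ?thesis using a b unfolding a_def b_def by (simp add: field_simps)
qed


lemma l2_inner_summ: assumes "f \<in> l2" "g \<in> l2" shows "(\<lambda>i. cnj (f i) * g i) summable_on UNIV"
proof -
  have "(\<lambda>i. norm (cnj (f i) * g i)) summable_on UNIV"
    using l2_prod_summ[OF assms] by (simp add: norm_mult)
  thus ?thesis using summable_on_iff_abs_summable_on_complex by blast
qed

lemma l2_cs: assumes "f \<in> l2" "g \<in> l2" shows "cmod (l2_inner f g) \<le> l2_norm f * l2_norm g"
proof -
  have a: "(\<lambda>i. norm (cnj (f i) * g i)) summable_on UNIV"
    using l2_prod_summ[OF assms] by (simp add: norm_mult)
  have "cmod (l2_inner f g) \<le> infsum (\<lambda>i. norm (cnj (f i) * g i)) UNIV"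
    unfolding l2_inner_def by (rule norm_infsum_bound) (rule a)
  also have "\<dots> = infsum (\<lambda>i. cmod (f i) * cmod (g i)) UNIV" by (simp add: norm_mult)
  also have "\<dots> \<le> l2_norm f * l2_norm g" by (rule l2_prod_bound[OF assms])
  finally show ?thesis .
qed

lemma l2_inner_self: assumes "f \<in> l2" shows "l2_inner f f = complex_of_real ((l2_norm f)\<^sup>2)"
proof -
  have e: "(\<lambda>i. cnj (f i) * f i) = (\<lambda>i. complex_of_real ((cmod (f i))\<^sup>2))"
    by (rule ext) (metis complex_norm_square mult.commute)
  have "((\<lambda>i. complex_of_real ((cmod (f i))\<^sup>2)) has_sum complex_of_real (infsum (\<lambda>i. (cmod (f i))\<^sup>2) UNIV)) UNIV"
    by (rule has_sum_of_real, rule has_sum_infsum, rule l2_summ[OF assms])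
  hence "infsum (\<lambda>i. complex_of_real ((cmod (f i))\<^sup>2)) UNIV = complex_of_real (infsum (\<lambda>i. (cmod (f i))\<^sup>2) UNIV)"
    by (rule infsumI)
  thus ?thesis unfolding l2_inner_def e l2_norm_sq .
qed

lemma l2_triangle: assumes "f \<in> l2" "g \<in> l2" shows "l2_norm (\<lambda>i. f i + g i) \<le> l2_norm f + l2_norm g"
proof -
  define A where "A = (\<lambda>i. (cmod (f i))\<^sup>2)"
  define B where "B = (\<lambda>i. (cmod (g i))\<^sup>2)"
  define P where "P = (\<lambda>i. cmod (f i) * cmod (g i))"
  have sA: "A summable_on UNIV" unfolding A_def using assms(1) by (rule l2_summ)
  have sB: "B summable_on UNIV" unfolding B_def using assms(2) by (rule l2_summ)
  have sP: "(\<lambda>i. 2 * P i) summable_on UNIV" unfolding P_def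
    by (rule summable_on_cmult_right, rule l2_prod_summ[OF assms])
  have "(l2_norm (\<lambda>i. f i + g i))\<^sup>2 = infsum (\<lambda>i. (cmod (f i + g i))\<^sup>2) UNIV" by (rule l2_norm_sq)
  also have "\<dots> \<le> infsum (\<lambda>i. (A i + 2 * P i) + B i) UNIV"
  proof (rule infsum_mono)
    show "(\<lambda>i. (cmod (f i + g i))\<^sup>2) summable_on UNIV" using l2_add[OF assms] by (rule l2_summ)
    show "(\<lambda>i. (A i + 2 * P i) + B i) summable_on UNIV"
      by (rule summable_on_add[OF summable_on_add[OF sA sP] sB])
    fix i
    have "cmod (f i + g i) \<le> cmod (f i) + cmod (g i)" by (rule norm_triangle_ineq)
    hence "(cmod (f i + g i))\<^sup>2 \<le> (cmod (f i) + cmod (g i))\<^sup>2" by (simp add: power_mono)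
    thus "(cmod (f i + g i))\<^sup>2 \<le> (A i + 2 * P i) + B i" unfolding A_def B_def P_def
      by (simp add: power2_sum mult.assoc)
  qed
  also have "\<dots> = (infsum A UNIV + 2 * infsum P UNIV) + infsum B UNIV"
    by (simp only: infsum_add[OF summable_on_add[OF sA sP] sB] infsum_add[OF sA sP] infsum_cmult_right')
  also have "\<dots> \<le> ((l2_norm f)\<^sup>2 + 2 * (l2_norm f * l2_norm g)) + (l2_norm g)\<^sup>2"
    using l2_prod_bound[OF assms] unfolding A_def B_def P_def l2_norm_sq by simp
  also have "\<dots> = (l2_norm f + l2_norm g)\<^sup>2" by (simp add: power2_sum mult.assoc)
  finally show ?thesis
    by (rule power2_le_imp_le) (simp add: l2_norm_nonneg add_nonneg_nonneg)
qed

lemma l2_norm_uminus: "f \<in> l2 \<Longrightarrow> l2_norm (\<lambda>i. - f i) = l2_norm f"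
  using l2_scale(2)[of f "-1"] by simp

lemma l2_triangle_diff: assumes "f \<in> l2" "g \<in> l2" shows "l2_norm (\<lambda>i. f i - g i) \<le> l2_norm f + l2_norm g"
  using l2_triangle[OF assms(1) l2_uminus[OF assms(2)]] l2_norm_uminus[OF assms(2)] by simp

lemma l2_norm_sum: "finite A \<Longrightarrow> (\<And>k. k \<in> A \<Longrightarrow> F k \<in> l2) \<Longrightarrow> l2_norm (\<lambda>p. \<Sum>k\<in>A. F k p) \<le> (\<Sum>k\<in>A. l2_norm (F k))"
proof (induction A rule: finite_induct)
  case empty
  then show ?case by simp
next
  case (insert a A)
  have "l2_norm (\<lambda>p. \<Sum>k\<in>insert a A. F k p) = l2_norm (\<lambda>p. F a p + (\<Sum>k\<in>A. F k p))"
    using insert(1,2) by simp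
  also have "\<dots> \<le> l2_norm (F a) + l2_norm (\<lambda>p. \<Sum>k\<in>A. F k p)"
    by (rule l2_triangle) (use insert l2_sum in auto)
  also have "\<dots> \<le> l2_norm (F a) + (\<Sum>k\<in>A. l2_norm (F k))" using insert by simp
  also have "\<dots> = (\<Sum>k\<in>insert a A. l2_norm (F k))" using insert(1,2) by simp
  finally show ?case .
qed

lemma l2_inner_add_left: assumes "f \<in> l2" "g \<in> l2" "h \<in> l2"
  shows "l2_inner (\<lambda>i. f i + g i) h = l2_inner f h + l2_inner g h"
  unfolding l2_inner_def
  using infsum_add[OF l2_inner_summ[OF assms(1,3)] l2_inner_summ[OF assms(2,3)]]
  by (simp add: distrib_right)

lemma l2_inner_add_right: assumes "f \<in> l2" "g \<in> l2" "h \<in> l2"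
  shows "l2_inner h (\<lambda>i. f i + g i) = l2_inner h f + l2_inner h g"
  unfolding l2_inner_def
  using infsum_add[OF l2_inner_summ[OF assms(3,1)] l2_inner_summ[OF assms(3,2)]]
  by (simp add: distrib_left)

lemma l2_inner_sum_left: "finite A \<Longrightarrow> (\<And>k. k \<in> A \<Longrightarrow> F k \<in> l2) \<Longrightarrow> h \<in> l2 \<Longrightarrow>
   l2_inner (\<lambda>p. \<Sum>k\<in>A. F k p) h = (\<Sum>k\<in>A. l2_inner (F k) h)"
proof (induction A rule: finite_induct)
  case empty
  then show ?case by (simp add: l2_inner_def)
next
  case (insert a A)
  have "l2_inner (\<lambda>p. \<Sum>k\<in>insert a A. F k p) h = l2_inner (\<lambda>p. F a p + (\<Sum>k\<in>A. F k p)) h"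
    using insert(1,2) by simp
  also have "\<dots> = l2_inner (F a) h + l2_inner (\<lambda>p. \<Sum>k\<in>A. F k p) h"
    by (rule l2_inner_add_left) (use insert l2_sum in auto)
  also have "\<dots> = (\<Sum>k\<in>insert a A. l2_inner (F k) h)" using insert by simp
  finally show ?case .
qed

lemma l2_inner_sum_right: "finite A \<Longrightarrow> (\<And>k. k \<in> A \<Longrightarrow> F k \<in> l2) \<Longrightarrow> h \<in> l2 \<Longrightarrow>
   l2_inner h (\<lambda>p. \<Sum>k\<in>A. F k p) = (\<Sum>k\<in>A. l2_inner h (F k))"
proof (induction A rule: finite_induct)
  case empty
  then show ?case by (simp add: l2_inner_def)
next
  case (insert a A)
  have "l2_inner h (\<lambda>p. \<Sum>k\<in>insert a A. F k p) = l2_inner h (\<lambda>p. F a p + (\<Sum>k\<in>A. F k p))"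
    using insert(1,2) by simp
  also have "\<dots> = l2_inner h (F a) + l2_inner h (\<lambda>p. \<Sum>k\<in>A. F k p)"
    by (rule l2_inner_add_right) (use insert l2_sum in auto)
  also have "\<dots> = (\<Sum>k\<in>insert a A. l2_inner h (F k))" using insert by simp
  finally show ?case .
qed

lemma bop_l2: "bounded_op x \<Longrightarrow> f \<in> l2 \<Longrightarrow> x f \<in> l2"
  by (simp add: bounded_op_def)

lemma bop_add: "bounded_op x \<Longrightarrow> f \<in> l2 \<Longrightarrow> g \<in> l2 \<Longrightarrow> x (\<lambda>i. f i + g i) = (\<lambda>i. x f i + x g i)"
  by (simp add: bounded_op_def)

lemma bop_scale: "bounded_op x \<Longrightarrow> f \<in> l2 \<Longrightarrow> x (\<lambda>i. c * f i) = (\<lambda>i. c * x f i)"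
  by (simp add: bounded_op_def)

lemma bop_zero: "bounded_op x \<Longrightarrow> x (\<lambda>_. 0) = (\<lambda>_. 0)"
  using bop_scale[of x "\<lambda>_. 0" 0] by simp

lemma bop_diff: assumes "bounded_op x" "f \<in> l2" "g \<in> l2"
  shows "x (\<lambda>i. f i - g i) = (\<lambda>i. x f i - x g i)"
proof -
  have "x (\<lambda>i. f i - g i) = x (\<lambda>i. f i + (-1) * g i)" by simp
  also have "\<dots> = (\<lambda>i. x f i + x (\<lambda>i. (-1) * g i) i)"
    by (rule bop_add[OF assms(1,2) l2_scale(1)[OF assms(3)]])
  also have "x (\<lambda>i. (-1) * g i) = (\<lambda>i. (-1) * x g i)" by (rule bop_scale[OF assms(1,3)])
  finally show ?thesis by simp
qed

lemma bop_sum: assumes x: "bounded_op x" shows "finite A \<Longrightarrow> (\<And>k. k \<in> A \<Longrightarrow> G k \<in> l2) \<Longrightarrow>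
  x (\<lambda>p. \<Sum>k\<in>A. G k p) = (\<lambda>p. \<Sum>k\<in>A. x (G k) p)"
proof (induction A rule: finite_induct)
  case empty
  then show ?case by (simp add: bop_zero[OF x])
next
  case (insert a A)
  have "x (\<lambda>p. \<Sum>k\<in>insert a A. G k p) = x (\<lambda>p. G a p + (\<Sum>k\<in>A. G k p))"
    using insert(1,2) by simp
  also have "\<dots> = (\<lambda>p. x (G a) p + x (\<lambda>p. \<Sum>k\<in>A. G k p) p)"
    by (rule bop_add[OF x]) (use insert l2_sum in auto)
  also have "\<dots> = (\<lambda>p. \<Sum>k\<in>insert a A. x (G k) p)" using insert by simp
  finally show ?case .
qed

lemma op_norm_bdd: assumes "bounded_op x"
  shows "bdd_above {l2_norm (x f) | f. f \<in> l2 \<and> l2_norm f \<le> 1}"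
proof -
  obtain C where C: "\<forall>f\<in>l2. l2_norm (x f) \<le> C * l2_norm f" using assms unfolding bounded_op_def by blast
  show ?thesis
  proof (rule bdd_aboveI[where M="\<bar>C\<bar>"])
    fix y assume "y \<in> {l2_norm (x f) | f. f \<in> l2 \<and> l2_norm f \<le> 1}"
    then obtain f where f: "f \<in> l2" "l2_norm f \<le> 1" "y = l2_norm (x f)" by blast
    have "C * l2_norm f \<le> \<bar>C\<bar> * l2_norm f" by (rule mult_right_mono) (auto simp: l2_norm_nonneg)
    also have "\<dots> \<le> \<bar>C\<bar>" using f(2) l2_norm_nonneg[of f] by (simp add: mult_left_le)
    finally show "y \<le> \<bar>C\<bar>" using C f by force
  qed
qed

lemma op_norm_upper: "bounded_op x \<Longrightarrow> f \<in> l2 \<Longrightarrow> l2_norm f \<le> 1 \<Longrightarrow> l2_norm (x f) \<le> op_norm x"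
  unfolding op_norm_def by (rule cSup_upper) (auto intro: op_norm_bdd)

lemma op_norm_nonneg: "bounded_op x \<Longrightarrow> 0 \<le> op_norm x"
  using op_norm_upper[of x "\<lambda>_. 0"] by (simp add: bop_zero)

lemma op_norm_bound: assumes "bounded_op x" "f \<in> l2"
  shows "l2_norm (x f) \<le> op_norm x * l2_norm f"
proof (cases "l2_norm f = 0")
  case True
  have "f = (\<lambda>_. 0)" using True l2_norm_eq0[OF assms(2)] by blast
  then show ?thesis by (simp add: bop_zero[OF assms(1)])
next
  case False
  define n where "n = l2_norm f"
  have n: "n > 0" using False l2_norm_nonneg[of f] unfolding n_def by linarith
  define g where "g = (\<lambda>i. complex_of_real (1/n) * f i)"
  have g: "g \<in> l2" unfolding g_def by (rule l2_scale(1)[OF assms(2)])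
  have gn: "l2_norm g = 1" unfolding g_def l2_scale(2)[OF assms(2)] using n unfolding n_def by (simp add: norm_divide)
  have xg: "x g = (\<lambda>i. complex_of_real (1/n) * x f i)" unfolding g_def by (rule bop_scale[OF assms])
  have "l2_norm (x g) = (1/n) * l2_norm (x f)"
    unfolding xg l2_scale(2)[OF bop_l2[OF assms]] using n by (simp add: norm_divide)
  moreover have "l2_norm (x g) \<le> op_norm x" using op_norm_upper[OF assms(1) g] gn by simp
  ultimately have "(1/n) * l2_norm (x f) \<le> op_norm x" by simp
  thus ?thesis using n unfolding n_def by (simp add: field_simps)
qed

lemma op_norm_le: assumes "\<And>f. f \<in> l2 \<Longrightarrow> l2_norm f \<le> 1 \<Longrightarrow> l2_norm (x f) \<le> c"
  shows "op_norm x \<le> c"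
  unfolding op_norm_def
proof (rule cSup_least)
  have "(\<lambda>_. 0) \<in> l2 \<and> l2_norm (\<lambda>_. 0::complex) \<le> 1" by simp
  thus "{l2_norm (x f) |f. f \<in> l2 \<and> l2_norm f \<le> 1} \<noteq> {}" by blast
  fix y assume "y \<in> {l2_norm (x f) |f. f \<in> l2 \<and> l2_norm f \<le> 1}"
  then show "y \<le> c" using assms by blast
qed

lemma bounded_opI:
  assumes "\<And>f. f \<in> l2 \<Longrightarrow> x f \<in> l2"
    and "\<And>f g. f \<in> l2 \<Longrightarrow> g \<in> l2 \<Longrightarrow> x (\<lambda>i. f i + g i) = (\<lambda>i. x f i + x g i)"
    and "\<And>f c. f \<in> l2 \<Longrightarrow> x (\<lambda>i. c * f i) = (\<lambda>i. c * x f i)"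
    and "\<And>f. f \<in> l2 \<Longrightarrow> l2_norm (x f) \<le> C * l2_norm f"
  shows "bounded_op x"
  unfolding bounded_op_def using assms by blast

lemma bounded_op_comp: fixes a b :: "'a op" assumes "bounded_op a" "bounded_op b"
  shows "bounded_op (\<lambda>f. a (b f))"
proof (rule bounded_opI[where C="op_norm a * op_norm b"])
  fix f :: "'a \<Rightarrow> complex" assume f: "f \<in> l2"
  show "a (b f) \<in> l2" by (rule bop_l2[OF assms(1) bop_l2[OF assms(2) f]])
  have "l2_norm (a (b f)) \<le> op_norm a * l2_norm (b f)" by (rule op_norm_bound[OF assms(1) bop_l2[OF assms(2) f]])
  also have "\<dots> \<le> op_norm a * (op_norm b * l2_norm f)"
    by (rule mult_left_mono[OF op_norm_bound[OF assms(2) f] op_norm_nonneg[OF assms(1)]])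
  finally show "l2_norm (a (b f)) \<le> op_norm a * op_norm b * l2_norm f" by (simp add: mult.assoc)
next
  fix f g :: "'a \<Rightarrow> complex" assume f: "f \<in> l2" and g: "g \<in> l2"
  show "a (b (\<lambda>i. f i + g i)) = (\<lambda>i. a (b f) i + a (b g) i)"
    using bop_add[OF assms(2) f g] bop_add[OF assms(1) bop_l2[OF assms(2) f] bop_l2[OF assms(2) g]] by simp
next
  fix f :: "'a \<Rightarrow> complex" and c assume f: "f \<in> l2"
  show "a (b (\<lambda>i. c * f i)) = (\<lambda>i. c * a (b f) i)"
    using bop_scale[OF assms(2) f] bop_scale[OF assms(1) bop_l2[OF assms(2) f]] by simp
qed

lemma bounded_op_plus: fixes a b :: "'a op" assumes "bounded_op a" "bounded_op b"
  shows "bounded_op (\<lambda>f i. a f i + b f i)"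
proof (rule bounded_opI[where C="op_norm a + op_norm b"])
  fix f :: "'a \<Rightarrow> complex" assume f: "f \<in> l2"
  show "(\<lambda>i. a f i + b f i) \<in> l2" by (rule l2_add[OF bop_l2[OF assms(1) f] bop_l2[OF assms(2) f]])
  have "l2_norm (\<lambda>i. a f i + b f i) \<le> l2_norm (a f) + l2_norm (b f)" by (rule l2_triangle[OF bop_l2[OF assms(1) f] bop_l2[OF assms(2) f]])
  also have "\<dots> \<le> op_norm a * l2_norm f + op_norm b * l2_norm f"
    by (rule add_mono[OF op_norm_bound[OF assms(1) f] op_norm_bound[OF assms(2) f]])
  finally show "l2_norm (\<lambda>i. a f i + b f i) \<le> (op_norm a + op_norm b) * l2_norm f" by (simp add: distrib_right)
next
  fix f g :: "'a \<Rightarrow> complex" assume f: "f \<in> l2" and g: "g \<in> l2"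
  show "(\<lambda>i. a (\<lambda>i. f i + g i) i + b (\<lambda>i. f i + g i) i) = (\<lambda>i. (a f i + b f i) + (a g i + b g i))"
    using bop_add[OF assms(1) f g] bop_add[OF assms(2) f g] by (simp add: algebra_simps)
next
  fix f :: "'a \<Rightarrow> complex" and c assume f: "f \<in> l2"
  show "(\<lambda>i. a (\<lambda>i. c * f i) i + b (\<lambda>i. c * f i) i) = (\<lambda>i. c * (a f i + b f i))"
    using bop_scale[OF assms(1) f] bop_scale[OF assms(2) f] by (simp add: algebra_simps)
qed

lemma bounded_op_minus: fixes a b :: "'a op" assumes "bounded_op a" "bounded_op b"
  shows "bounded_op (\<lambda>f i. a f i - b f i)"
proof (rule bounded_opI[where C="op_norm a + op_norm b"])
  fix f :: "'a \<Rightarrow> complex" assume f: "f \<in> l2"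
  show "(\<lambda>i. a f i - b f i) \<in> l2" by (rule l2_diff[OF bop_l2[OF assms(1) f] bop_l2[OF assms(2) f]])
  have "l2_norm (\<lambda>i. a f i - b f i) \<le> l2_norm (a f) + l2_norm (b f)" by (rule l2_triangle_diff[OF bop_l2[OF assms(1) f] bop_l2[OF assms(2) f]])
  also have "\<dots> \<le> op_norm a * l2_norm f + op_norm b * l2_norm f"
    by (rule add_mono[OF op_norm_bound[OF assms(1) f] op_norm_bound[OF assms(2) f]])
  finally show "l2_norm (\<lambda>i. a f i - b f i) \<le> (op_norm a + op_norm b) * l2_norm f" by (simp add: distrib_right)
next
  fix f g :: "'a \<Rightarrow> complex" assume f: "f \<in> l2" and g: "g \<in> l2"
  show "(\<lambda>i. a (\<lambda>i. f i + g i) i - b (\<lambda>i. f i + g i) i) = (\<lambda>i. (a f i - b f i) + (a g i - b g i))"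
    using bop_add[OF assms(1) f g] bop_add[OF assms(2) f g] by (simp add: algebra_simps)
next
  fix f :: "'a \<Rightarrow> complex" and c assume f: "f \<in> l2"
  show "(\<lambda>i. a (\<lambda>i. c * f i) i - b (\<lambda>i. c * f i) i) = (\<lambda>i. c * (a f i - b f i))"
    using bop_scale[OF assms(1) f] bop_scale[OF assms(2) f] by (simp add: algebra_simps)
qed

lemma bounded_op_commutator: assumes a: "bounded_op a" and b: "bounded_op b" shows "bounded_op (commutator a b)"
  unfolding commutator_def by (rule bounded_op_minus[OF bounded_op_comp[OF a b] bounded_op_comp[OF b a]])

lemma bounded_op_anticommutator: assumes a: "bounded_op a" and b: "bounded_op b" shows "bounded_op (anticommutator a b)"
  unfolding anticommutator_def by (rule bounded_op_plus[OF bounded_op_comp[OF a b] bounded_op_comp[OF b a]])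

lemma bounded_op_sum: "finite A \<Longrightarrow> (\<And>k. k \<in> A \<Longrightarrow> bounded_op (T k)) \<Longrightarrow>
  bounded_op (\<lambda>f p. \<Sum>k\<in>A. T k f p)"
proof (induction A rule: finite_induct)
  case empty
  show ?case by (rule bounded_opI[where C=0]) simp_all
next
  case (insert a A)
  have ta: "bounded_op (T a)" using insert.prems by simp
  have tA: "bounded_op (\<lambda>f p. \<Sum>k\<in>A. T k f p)" using insert.IH insert.prems by simp
  have "bounded_op (\<lambda>f p. T a f p + (\<Sum>k\<in>A. T k f p))" by (rule bounded_op_plus[OF ta tA])
  thus ?case using insert(1,2) by simp
qed

lemma bij_swap_UNIV: "bij_betw prod.swap UNIV UNIV"
  by (rule bij_betwI[where g=prod.swap]) auto

lemma l2_swap: "H \<in> l2 \<Longrightarrow> (\<lambda>p. H (prod.swap p)) \<in> l2"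
  unfolding l2_def using summable_on_reindex_bij_betw[OF bij_swap_UNIV, of "\<lambda>p. (cmod (H p))\<^sup>2"] by simp

lemma l2_norm_swap: "l2_norm (\<lambda>p. H (prod.swap p)) = l2_norm H"
  unfolding l2_norm_def using infsum_reindex_bij_betw[OF bij_swap_UNIV, of "\<lambda>p. (cmod (H p))\<^sup>2"] by simp

lemma l2_inner_swap: "l2_inner (\<lambda>p. H (prod.swap p)) (\<lambda>p. K (prod.swap p)) = l2_inner H K"
  unfolding l2_inner_def using infsum_reindex_bij_betw[OF bij_swap_UNIV, of "\<lambda>p. cnj (H p) * K p"] by simp

lemma slice_R: assumes "F \<in> l2" shows "(\<lambda>l. F (i, l)) \<in> l2"
proof -
  have "(\<lambda>(x,y). (cmod (F (x,y)))\<^sup>2) summable_on Sigma UNIV (\<lambda>_. UNIV)"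
    using l2_summ[OF assms] by (simp add: case_prod_beta')
  from summable_on_SigmaD1[where f="\<lambda>x y. (cmod (F (x,y)))\<^sup>2", OF this]
  show ?thesis unfolding l2_def by simp
qed

lemma slice_L: assumes "F \<in> l2" shows "(\<lambda>k. F (k, j)) \<in> l2"
  using slice_R[OF l2_swap[OF assms], of j] by simp

lemma norm_sigma_R: assumes "F \<in> l2"
  shows "(\<lambda>i. (l2_norm (\<lambda>l. F (i, l)))\<^sup>2) summable_on UNIV"
    "(l2_norm F)\<^sup>2 = infsum (\<lambda>i. (l2_norm (\<lambda>l. F (i, l)))\<^sup>2) UNIV"
proof -
  have s: "(\<lambda>p. (cmod (F p))\<^sup>2) summable_on Sigma UNIV (\<lambda>_. UNIV)"
    using l2_summ[OF assms] by simp
  have s2: "(\<lambda>l. (cmod (F (i, l)))\<^sup>2) summable_on UNIV" for i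
    using slice_R[OF assms] unfolding l2_def by simp
  show "(\<lambda>i. (l2_norm (\<lambda>l. F (i, l)))\<^sup>2) summable_on UNIV"
    unfolding l2_norm_sq using summable_on_SigmaD[OF s s2] by simp
  show "(l2_norm F)\<^sup>2 = infsum (\<lambda>i. (l2_norm (\<lambda>l. F (i, l)))\<^sup>2) UNIV"
    unfolding l2_norm_sq using infsum_Sigma_banach[OF s] by simp
qed

lemma norm_sigma_L: assumes "F \<in> l2"
  shows "(\<lambda>j. (l2_norm (\<lambda>k. F (k, j)))\<^sup>2) summable_on UNIV"
    "(l2_norm F)\<^sup>2 = infsum (\<lambda>j. (l2_norm (\<lambda>k. F (k, j)))\<^sup>2) UNIV"
proof -
  note R = norm_sigma_R[OF l2_swap[OF assms]]
  show "(\<lambda>j. (l2_norm (\<lambda>k. F (k, j)))\<^sup>2) summable_on UNIV" using R(1) by simp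
  have "(l2_norm F)\<^sup>2 = (l2_norm (\<lambda>p. F (prod.swap p)))\<^sup>2" by (simp only: l2_norm_swap)
  also have "\<dots> = infsum (\<lambda>i. (l2_norm (\<lambda>l. F (prod.swap (i, l))))\<^sup>2) UNIV" by (rule R(2))
  also have "\<dots> = infsum (\<lambda>j. (l2_norm (\<lambda>k. F (k, j)))\<^sup>2) UNIV" by simp
  finally show "(l2_norm F)\<^sup>2 = infsum (\<lambda>j. (l2_norm (\<lambda>k. F (k, j)))\<^sup>2) UNIV" .
qed

lemma inner_sigma_R: assumes "F \<in> l2" "G \<in> l2"
  shows "l2_inner F G = infsum (\<lambda>i. l2_inner (\<lambda>l. F (i, l)) (\<lambda>l. G (i, l))) UNIV"
proof -
  have s: "(\<lambda>p. cnj (F p) * G p) summable_on Sigma UNIV (\<lambda>_. UNIV)"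
    using l2_inner_summ[OF assms] by simp
  show ?thesis unfolding l2_inner_def using infsum_Sigma_banach[OF s] by simp
qed

lemma inner_sigma_L: assumes "F \<in> l2" "G \<in> l2"
  shows "l2_inner F G = infsum (\<lambda>j. l2_inner (\<lambda>k. F (k, j)) (\<lambda>k. G (k, j))) UNIV"
proof -
  have "l2_inner F G = l2_inner (\<lambda>p. F (prod.swap p)) (\<lambda>p. G (prod.swap p))" by (rule l2_inner_swap[symmetric])
  also have "\<dots> = infsum (\<lambda>i. l2_inner (\<lambda>l. F (prod.swap (i, l))) (\<lambda>l. G (prod.swap (i, l)))) UNIV"
    by (rule inner_sigma_R[OF l2_swap[OF assms(1)] l2_swap[OF assms(2)]])
  also have "\<dots> = infsum (\<lambda>j. l2_inner (\<lambda>k. F (k, j)) (\<lambda>k. G (k, j))) UNIV" by simp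
  finally show ?thesis .
qed

lemma l2_from_slices_R: assumes "\<And>i. (\<lambda>l. H (i, l)) \<in> l2"
  and "(\<lambda>i. (l2_norm (\<lambda>l. H (i, l)))\<^sup>2) summable_on UNIV"
  shows "H \<in> l2"
proof -
  have "(\<lambda>p. (cmod (H p))\<^sup>2) summable_on Sigma UNIV (\<lambda>_. UNIV)"
  proof (rule summable_on_SigmaI[where g="\<lambda>i. (l2_norm (\<lambda>l. H (i, l)))\<^sup>2"])
    fix i :: 'a
    show "((\<lambda>l. (cmod (H (i, l)))\<^sup>2) has_sum (l2_norm (\<lambda>l. H (i, l)))\<^sup>2) UNIV"
      unfolding l2_norm_sq by (rule has_sum_infsum) (use assms(1)[of i] in \<open>simp add: l2_def\<close>)
  qed (use assms(2) in auto)
  thus ?thesis unfolding l2_def by simp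
qed

lemma right_ext_slice: "(\<lambda>l. right_ext y F (i, l)) = y (\<lambda>l. F (i, l))"
  by (simp add: right_ext_def)

lemma left_ext_slice: "(\<lambda>k. left_ext x F (k, j)) = x (\<lambda>k. F (k, j))"
  by (simp add: left_ext_def)

lemma R_l2_bound: assumes y: "bounded_op y" and F: "F \<in> l2"
  shows "right_ext y F \<in> l2" "l2_norm (right_ext y F) \<le> op_norm y * l2_norm F"
proof -
  define H where "H = right_ext y F"
  have sl: "(\<lambda>l. H (i, l)) \<in> l2" for i
    unfolding H_def right_ext_slice by (rule bop_l2[OF y slice_R[OF F]])
  have le: "(l2_norm (\<lambda>l. H (i, l)))\<^sup>2 \<le> (op_norm y)\<^sup>2 * (l2_norm (\<lambda>l. F (i, l)))\<^sup>2" for i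
  proof -
    have "l2_norm (\<lambda>l. H (i, l)) \<le> op_norm y * l2_norm (\<lambda>l. F (i, l))"
      unfolding H_def right_ext_slice by (rule op_norm_bound[OF y slice_R[OF F]])
    hence "(l2_norm (\<lambda>l. H (i, l)))\<^sup>2 \<le> (op_norm y * l2_norm (\<lambda>l. F (i, l)))\<^sup>2"
      by (intro power_mono) (auto simp: l2_norm_nonneg)
    thus ?thesis by (simp add: power_mult_distrib)
  qed
  have s1: "(\<lambda>i. (op_norm y)\<^sup>2 * (l2_norm (\<lambda>l. F (i, l)))\<^sup>2) summable_on UNIV"
    by (rule summable_on_cmult_right, rule norm_sigma_R(1)[OF F])
  have s2: "(\<lambda>i. (l2_norm (\<lambda>l. H (i, l)))\<^sup>2) summable_on UNIV"
    by (rule summable_on_comparison_test[OF s1]) (use le in auto)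
  have H: "H \<in> l2" by (rule l2_from_slices_R[OF sl s2])
  thus "right_ext y F \<in> l2" unfolding H_def .
  have "(l2_norm H)\<^sup>2 = infsum (\<lambda>i. (l2_norm (\<lambda>l. H (i, l)))\<^sup>2) UNIV" by (rule norm_sigma_R(2)[OF H])
  also have "\<dots> \<le> infsum (\<lambda>i. (op_norm y)\<^sup>2 * (l2_norm (\<lambda>l. F (i, l)))\<^sup>2) UNIV"
    by (rule infsum_mono[OF s2 s1 le])
  also have "\<dots> = (op_norm y)\<^sup>2 * (l2_norm F)\<^sup>2"
    by (simp only: infsum_cmult_right' norm_sigma_R(2)[OF F])
  also have "\<dots> = (op_norm y * l2_norm F)\<^sup>2" by (simp add: power_mult_distrib)
  finally have "(l2_norm H)\<^sup>2 \<le> (op_norm y * l2_norm F)\<^sup>2" .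
  thus "l2_norm (right_ext y F) \<le> op_norm y * l2_norm F" unfolding H_def
    by (rule power2_le_imp_le) (intro mult_nonneg_nonneg op_norm_nonneg y l2_norm_nonneg)
qed

lemma left_ext_swap: "left_ext x F = (\<lambda>p. right_ext x (\<lambda>q. F (prod.swap q)) (prod.swap p))"
  by (rule ext) (auto simp: left_ext_def right_ext_def)

lemma L_l2_bound: assumes x: "bounded_op x" and F: "F \<in> l2"
  shows "left_ext x F \<in> l2" "l2_norm (left_ext x F) \<le> op_norm x * l2_norm F"
proof -
  note R = R_l2_bound[OF x l2_swap[OF F]]
  show "left_ext x F \<in> l2" unfolding left_ext_swap by (rule l2_swap[OF R(1)])
  show "l2_norm (left_ext x F) \<le> op_norm x * l2_norm F"
    unfolding left_ext_swap l2_norm_swap using R(2) l2_norm_swap[of F] by simp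
qed

lemma bounded_op_R: fixes y :: "'b op" assumes y: "bounded_op y" shows "bounded_op (right_ext y :: ('a \<times> 'b) op)"
proof (rule bounded_opI[where C="op_norm y"])
  fix F :: "'a \<times> 'b \<Rightarrow> complex" assume F: "F \<in> l2"
  show "right_ext y F \<in> l2" "l2_norm (right_ext y F) \<le> op_norm y * l2_norm F"
    by (rule R_l2_bound[OF y F])+
next
  fix F G :: "'a \<times> 'b \<Rightarrow> complex" assume F: "F \<in> l2" and G: "G \<in> l2"
  show "right_ext y (\<lambda>i. F i + G i) = (\<lambda>i. right_ext y F i + right_ext y G i)"
  proof (rule ext, clarify)
    fix i j
    show "right_ext y (\<lambda>i. F i + G i) (i, j) = right_ext y F (i, j) + right_ext y G (i, j)"
      using bop_add[OF y slice_R[OF F, of i] slice_R[OF G, of i]] by (simp add: right_ext_def)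
  qed
next
  fix F :: "'a \<times> 'b \<Rightarrow> complex" and c assume F: "F \<in> l2"
  show "right_ext y (\<lambda>i. c * F i) = (\<lambda>i. c * right_ext y F i)"
  proof (rule ext, clarify)
    fix i j
    show "right_ext y (\<lambda>i. c * F i) (i, j) = c * right_ext y F (i, j)"
      using bop_scale[OF y slice_R[OF F, of i], of c] by (simp add: right_ext_def)
  qed
qed

lemma bounded_op_L: fixes x :: "'a op" assumes x: "bounded_op x" shows "bounded_op (left_ext x :: ('a \<times> 'b) op)"
proof (rule bounded_opI[where C="op_norm x"])
  fix F :: "'a \<times> 'b \<Rightarrow> complex" assume F: "F \<in> l2"
  show "left_ext x F \<in> l2" "l2_norm (left_ext x F) \<le> op_norm x * l2_norm F"
    by (rule L_l2_bound[OF x F])+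
next
  fix F G :: "'a \<times> 'b \<Rightarrow> complex" assume F: "F \<in> l2" and G: "G \<in> l2"
  show "left_ext x (\<lambda>i. F i + G i) = (\<lambda>i. left_ext x F i + left_ext x G i)"
  proof (rule ext, clarify)
    fix i j
    show "left_ext x (\<lambda>i. F i + G i) (i, j) = left_ext x F (i, j) + left_ext x G (i, j)"
      using bop_add[OF x slice_L[OF F, of j] slice_L[OF G, of j]] by (simp add: left_ext_def)
  qed
next
  fix F :: "'a \<times> 'b \<Rightarrow> complex" and c assume F: "F \<in> l2"
  show "left_ext x (\<lambda>i. c * F i) = (\<lambda>i. c * left_ext x F i)"
  proof (rule ext, clarify)
    fix i j
    show "left_ext x (\<lambda>i. c * F i) (i, j) = c * left_ext x F (i, j)"
      using bop_scale[OF x slice_L[OF F, of j], of c] by (simp add: left_ext_def)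
  qed
qed





definition delta :: "'a \<Rightarrow> 'a \<Rightarrow> complex" where "delta i = (\<lambda>k. if k = i then 1 else 0)"

lemma delta_l2: "delta i \<in> l2"
proof -
  have "((\<lambda>k. (cmod (delta i k))\<^sup>2) has_sum (\<Sum>k\<in>{i}. (cmod (delta i k))\<^sup>2)) UNIV"
    by (rule has_sum_finite_neutralI[where B="{i}"]) (auto simp: delta_def)
  thus ?thesis unfolding l2_def summable_on_def by blast
qed

lemma inner_delta: "l2_inner (delta i) f = f i"
  unfolding l2_inner_def
  by (rule infsumI, rule has_sum_finite_neutralI[where B="{i}"]) (auto simp: delta_def)

lemma sa_bounded: "self_adjoint x \<Longrightarrow> bounded_op x"
  by (simp add: self_adjoint_def)

lemma sa_matrix: assumes "self_adjoint x" "f \<in> l2" shows "x f i = l2_inner (x (delta i)) f"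
proof -
  have sa: "\<forall>f\<in>l2. \<forall>g\<in>l2. l2_inner (x f) g = l2_inner f (x g)"
    using assms(1) by (simp add: self_adjoint_def)
  have "l2_inner (x (delta i)) f = l2_inner (delta i) (x f)"
    using bspec[OF bspec[OF sa delta_l2] assms(2)] .
  thus ?thesis by (simp add: inner_delta)
qed

lemma prod_l2: assumes a: "a \<in> l2" and b: "b \<in> l2" shows "(\<lambda>(k,l). a k * b l) \<in> l2"
proof (rule l2_from_slices_R)
  fix k
  show "(\<lambda>l. (case (k, l) of (k, l) \<Rightarrow> a k * b l)) \<in> l2" using l2_scale(1)[OF b, of "a k"] by simp
next
  have e: "(\<lambda>k. (l2_norm (\<lambda>l. case (k, l) of (k, l) \<Rightarrow> a k * b l))\<^sup>2) = (\<lambda>k. (cmod (a k))\<^sup>2 * (l2_norm b)\<^sup>2)"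
    by (rule ext) (simp add: l2_scale(2)[OF b] power_mult_distrib)
  show "(\<lambda>k. (l2_norm (\<lambda>l. case (k, l) of (k, l) \<Rightarrow> a k * b l))\<^sup>2) summable_on UNIV"
    unfolding e by (rule summable_on_cmult_left, rule l2_summ[OF a])
qed

lemma LR_comm: assumes x: "self_adjoint x" and y: "self_adjoint y" and F: "F \<in> l2"
  shows "left_ext x (right_ext y F) = right_ext y (left_ext x F)"
proof (rule ext, clarify)
  fix i j
  have bx: "bounded_op x" and bY: "bounded_op y" using x y by (simp_all add: sa_bounded)
  define a where "a = x (delta i)"
  define b where "b = y (delta j)"
  have a: "a \<in> l2" unfolding a_def by (rule bop_l2[OF bx delta_l2])
  have b: "b \<in> l2" unfolding b_def by (rule bop_l2[OF bY delta_l2])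
  define G where "G = (\<lambda>(k,l). a k * b l)"
  have G: "G \<in> l2" unfolding G_def by (rule prod_l2[OF a b])
  have eR: "l2_inner G F = l2_inner a (\<lambda>k. l2_inner b (\<lambda>l. F (k,l)))"
  proof -
    have "l2_inner G F = infsum (\<lambda>k. l2_inner (\<lambda>l. G (k, l)) (\<lambda>l. F (k, l))) UNIV"
      by (rule inner_sigma_R[OF G F])
    also have "\<dots> = infsum (\<lambda>k. infsum (\<lambda>l. cnj (a k) * (cnj (b l) * F (k,l))) UNIV) UNIV"
      unfolding l2_inner_def G_def by (simp add: mult.assoc)
    also have "\<dots> = infsum (\<lambda>k. cnj (a k) * l2_inner b (\<lambda>l. F (k,l))) UNIV"
      unfolding l2_inner_def by (simp only: infsum_cmult_right')
    also have "\<dots> = l2_inner a (\<lambda>k. l2_inner b (\<lambda>l. F (k,l)))"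
      by (simp only: l2_inner_def)
    finally show ?thesis .
  qed
  have eL: "l2_inner G F = l2_inner b (\<lambda>l. l2_inner a (\<lambda>k. F (k,l)))"
  proof -
    have "l2_inner G F = infsum (\<lambda>l. l2_inner (\<lambda>k. G (k, l)) (\<lambda>k. F (k, l))) UNIV"
      by (rule inner_sigma_L[OF G F])
    also have "\<dots> = infsum (\<lambda>l. infsum (\<lambda>k. cnj (b l) * (cnj (a k) * F (k,l))) UNIV) UNIV"
      unfolding l2_inner_def G_def by (simp add: algebra_simps)
    also have "\<dots> = infsum (\<lambda>l. cnj (b l) * l2_inner a (\<lambda>k. F (k,l))) UNIV"
      unfolding l2_inner_def by (simp only: infsum_cmult_right')
    also have "\<dots> = l2_inner b (\<lambda>l. l2_inner a (\<lambda>k. F (k,l)))"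
      by (simp only: l2_inner_def)
    finally show ?thesis .
  qed
  have RF: "right_ext y F \<in> l2" by (rule R_l2_bound(1)[OF bY F])
  have LF: "left_ext x F \<in> l2" by (rule L_l2_bound(1)[OF bx F])
  have "left_ext x (right_ext y F) (i, j) = x (\<lambda>k. right_ext y F (k, j)) i"
    by (simp add: left_ext_def)
  also have "\<dots> = l2_inner a (\<lambda>k. right_ext y F (k, j))"
    unfolding a_def by (rule sa_matrix[OF x slice_L[OF RF]])
  also have "(\<lambda>k. right_ext y F (k, j)) = (\<lambda>k. l2_inner b (\<lambda>l. F (k, l)))"
  proof
    fix k
    have "right_ext y F (k, j) = y (\<lambda>l. F (k, l)) j" by (simp add: right_ext_def)
    also have "\<dots> = l2_inner b (\<lambda>l. F (k, l))" unfolding b_def by (rule sa_matrix[OF y slice_R[OF F]])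
    finally show "right_ext y F (k, j) = l2_inner b (\<lambda>l. F (k, l))" .
  qed
  also have "l2_inner a (\<lambda>k. l2_inner b (\<lambda>l. F (k, l))) = l2_inner G F"
    by (rule eR[symmetric])
  also have "\<dots> = l2_inner b (\<lambda>l. l2_inner a (\<lambda>k. F (k, l)))"
    by (rule eL)
  also have "(\<lambda>l. l2_inner a (\<lambda>k. F (k, l))) = (\<lambda>l. left_ext x F (i, l))"
  proof
    fix l
    have "left_ext x F (i, l) = x (\<lambda>k. F (k, l)) i" by (simp add: left_ext_def)
    also have "\<dots> = l2_inner a (\<lambda>k. F (k, l))" unfolding a_def by (rule sa_matrix[OF x slice_L[OF F]])
    finally show "l2_inner a (\<lambda>k. F (k, l)) = left_ext x F (i, l)" by simp
  qed
  also have "l2_inner b (\<lambda>l. left_ext x F (i, l)) = y (\<lambda>l. left_ext x F (i, l)) j"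
    unfolding b_def by (rule sa_matrix[OF y slice_R[OF LF], symmetric])
  also have "\<dots> = right_ext y (left_ext x F) (i, j)" by (simp add: right_ext_def)
  finally show "left_ext x (right_ext y F) (i, j) = right_ext y (left_ext x F) (i, j)" .
qed

lemma L_sa: assumes x: "self_adjoint x" and F: "F \<in> l2" and G: "G \<in> l2"
  shows "l2_inner (left_ext x F) G = l2_inner F (left_ext x G)"
proof -
  have bx: "bounded_op x" using x by (simp add: sa_bounded)
  have "l2_inner (left_ext x F) G = infsum (\<lambda>j. l2_inner (x (\<lambda>k. F (k, j))) (\<lambda>k. G (k, j))) UNIV"
    using inner_sigma_L[OF L_l2_bound(1)[OF bx F] G] by (simp add: left_ext_slice)
  also have "\<dots> = infsum (\<lambda>j. l2_inner (\<lambda>k. F (k, j)) (x (\<lambda>k. G (k, j)))) UNIV"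
    using x slice_L[OF F] slice_L[OF G] unfolding self_adjoint_def by simp
  also have "\<dots> = l2_inner F (left_ext x G)"
    using inner_sigma_L[OF F L_l2_bound(1)[OF bx G]] by (simp add: left_ext_slice)
  finally show ?thesis .
qed

lemma R_sa: assumes y: "self_adjoint y" and F: "F \<in> l2" and G: "G \<in> l2"
  shows "l2_inner (right_ext y F) G = l2_inner F (right_ext y G)"
proof -
  have bY: "bounded_op y" using y by (simp add: sa_bounded)
  have "l2_inner (right_ext y F) G = infsum (\<lambda>i. l2_inner (y (\<lambda>l. F (i, l))) (\<lambda>l. G (i, l))) UNIV"
    using inner_sigma_R[OF R_l2_bound(1)[OF bY F] G] by (simp add: right_ext_slice)
  also have "\<dots> = infsum (\<lambda>i. l2_inner (\<lambda>l. F (i, l)) (y (\<lambda>l. G (i, l)))) UNIV"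
    using y slice_R[OF F] slice_R[OF G] unfolding self_adjoint_def by simp
  also have "\<dots> = l2_inner F (right_ext y G)"
    using inner_sigma_R[OF F R_l2_bound(1)[OF bY G]] by (simp add: right_ext_slice)
  finally show ?thesis .
qed

lemma T_sa: assumes x: "self_adjoint x" and y: "self_adjoint y" and F: "F \<in> l2" and H: "H \<in> l2"
  shows "l2_inner (tensor_op x y F) H = l2_inner F (tensor_op x y H)"
proof -
  have bx: "bounded_op x" and bY: "bounded_op y" using x y by (simp_all add: sa_bounded)
  have "l2_inner (tensor_op x y F) H = l2_inner (left_ext x (right_ext y F)) H"
    by (simp add: tensor_op_def)
  also have "\<dots> = l2_inner (right_ext y F) (left_ext x H)"
    by (rule L_sa[OF x R_l2_bound(1)[OF bY F] H])
  also have "\<dots> = l2_inner F (right_ext y (left_ext x H))"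
    by (rule R_sa[OF y F L_l2_bound(1)[OF bx H]])
  also have "\<dots> = l2_inner F (tensor_op x y H)"
    by (simp add: tensor_op_def LR_comm[OF x y H])
  finally show ?thesis .
qed

lemma bounded_op_T: assumes x: "bounded_op x" and y: "bounded_op y" shows "bounded_op (tensor_op x y)"
  unfolding tensor_op_def o_def by (rule bounded_op_comp[OF bounded_op_L[OF x] bounded_op_R[OF y]])

lemma sum_square_split:
  fixes m :: nat
  shows "(\<Sum>k<m. \<Sum>l<m. (p k l :: complex)) = (\<Sum>k<m. p k k) + (\<Sum>j<m. \<Sum>i<j. p i j + p j i)"
proof (induction m)
  case 0
  then show ?case by simp
next
  case (Suc m)
  have "(\<Sum>k<Suc m. \<Sum>l<Suc m. p k l) = (\<Sum>k<m. \<Sum>l<m. p k l) + (\<Sum>k<m. p k m) + (\<Sum>l<m. p m l) + p m m"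
    by (simp add: sum.distrib algebra_simps)
  also have "\<dots> = (\<Sum>k<Suc m. p k k) + (\<Sum>j<Suc m. \<Sum>i<j. p i j + p j i)"
    using Suc by (simp add: sum.distrib algebra_simps)
  finally show ?case .
qed

lemma R_comm_eq: "right_ext (commutator c d) F = (\<lambda>p. right_ext c (right_ext d F) p - right_ext d (right_ext c F) p)"
  by (rule ext, clarify) (simp add: right_ext_def commutator_def)

lemma R_acomm_eq: "right_ext (anticommutator c d) F = (\<lambda>p. right_ext c (right_ext d F) p + right_ext d (right_ext c F) p)"
  by (rule ext, clarify) (simp add: right_ext_def anticommutator_def)

lemma L_comm_eq: "left_ext (commutator a b) G = (\<lambda>p. left_ext a (left_ext b G) p - left_ext b (left_ext a G) p)"
  by (rule ext, clarify) (simp add: left_ext_def commutator_def)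

lemma L_acomm_eq: "left_ext (anticommutator a b) G = (\<lambda>p. left_ext a (left_ext b G) p + left_ext b (left_ext a G) p)"
  by (rule ext, clarify) (simp add: left_ext_def anticommutator_def)

lemma PQ_lemma:
  fixes a b :: "'i op" and c d :: "'j op" and F :: "'i \<times> 'j \<Rightarrow> complex"
  assumes a: "bounded_op a" and b: "bounded_op b" and c: "bounded_op c" and d: "bounded_op d" and F: "F \<in> l2"
  shows "left_ext a (left_ext b (right_ext c (right_ext d F))) p + left_ext b (left_ext a (right_ext d (right_ext c F))) p
    = (1/2) * (left_ext (commutator a b) (right_ext (commutator c d) F) p
             + left_ext (anticommutator a b) (right_ext (anticommutator c d) F) p)"
proof -
  have La: "bounded_op (left_ext a :: ('i \<times> 'j) op)" by (rule bounded_op_L[OF a])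
  have Lb: "bounded_op (left_ext b :: ('i \<times> 'j) op)" by (rule bounded_op_L[OF b])
  have Rc: "bounded_op (right_ext c :: ('i \<times> 'j) op)" by (rule bounded_op_R[OF c])
  have Rd: "bounded_op (right_ext d :: ('i \<times> 'j) op)" by (rule bounded_op_R[OF d])
  define G1 where "G1 = right_ext c (right_ext d F)"
  define G2 where "G2 = right_ext d (right_ext c F)"
  have G1: "G1 \<in> l2" unfolding G1_def by (rule bop_l2[OF Rc bop_l2[OF Rd F]])
  have G2: "G2 \<in> l2" unfolding G2_def by (rule bop_l2[OF Rd bop_l2[OF Rc F]])
  have bG1: "left_ext b G1 \<in> l2" by (rule bop_l2[OF Lb G1])
  have bG2: "left_ext b G2 \<in> l2" by (rule bop_l2[OF Lb G2])
  have aG1: "left_ext a G1 \<in> l2" by (rule bop_l2[OF La G1])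
  have aG2: "left_ext a G2 \<in> l2" by (rule bop_l2[OF La G2])
  have e1: "left_ext a (left_ext b (\<lambda>p. G1 p - G2 p)) = (\<lambda>p. left_ext a (left_ext b G1) p - left_ext a (left_ext b G2) p)"
    unfolding bop_diff[OF Lb G1 G2] by (rule bop_diff[OF La bG1 bG2])
  have e2: "left_ext b (left_ext a (\<lambda>p. G1 p - G2 p)) = (\<lambda>p. left_ext b (left_ext a G1) p - left_ext b (left_ext a G2) p)"
    unfolding bop_diff[OF La G1 G2] by (rule bop_diff[OF Lb aG1 aG2])
  have e3: "left_ext a (left_ext b (\<lambda>p. G1 p + G2 p)) = (\<lambda>p. left_ext a (left_ext b G1) p + left_ext a (left_ext b G2) p)"
    unfolding bop_add[OF Lb G1 G2] by (rule bop_add[OF La bG1 bG2])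
  have e4: "left_ext b (left_ext a (\<lambda>p. G1 p + G2 p)) = (\<lambda>p. left_ext b (left_ext a G1) p + left_ext b (left_ext a G2) p)"
    unfolding bop_add[OF La G1 G2] by (rule bop_add[OF Lb aG1 aG2])
  have Qc: "left_ext (commutator a b) (right_ext (commutator c d) F) p
      = (left_ext a (left_ext b G1) p - left_ext a (left_ext b G2) p) - (left_ext b (left_ext a G1) p - left_ext b (left_ext a G2) p)"
    unfolding R_comm_eq L_comm_eq G1_def[symmetric] G2_def[symmetric] e1 e2 by simp
  have Qa: "left_ext (anticommutator a b) (right_ext (anticommutator c d) F) p
      = (left_ext a (left_ext b G1) p + left_ext a (left_ext b G2) p) + (left_ext b (left_ext a G1) p + left_ext b (left_ext a G2) p)"
    unfolding R_acomm_eq L_acomm_eq G1_def[symmetric] G2_def[symmetric] e3 e4 by simp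
  show ?thesis unfolding Qc Qa G1_def G2_def by (simp add: field_simps)
qed

lemma contr_L: "bounded_op x \<Longrightarrow> op_norm x \<le> 1 \<Longrightarrow> G \<in> l2 \<Longrightarrow> l2_norm (left_ext x G) \<le> l2_norm G"
  using L_l2_bound(2)[of x G] mult_right_mono[of "op_norm x" 1 "l2_norm G"] l2_norm_nonneg[of G]
  by simp

lemma contr_R: "bounded_op x \<Longrightarrow> op_norm x \<le> 1 \<Longrightarrow> G \<in> l2 \<Longrightarrow> l2_norm (right_ext x G) \<le> l2_norm G"
  using R_l2_bound(2)[of x G] mult_right_mono[of "op_norm x" 1 "l2_norm G"] l2_norm_nonneg[of G]
  by simp

lemma LR_bound: assumes "bounded_op a" "bounded_op c" "F \<in> l2"
  shows "l2_norm (left_ext a (right_ext c F)) \<le> op_norm a * op_norm c * l2_norm F"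
proof -
  have "l2_norm (left_ext a (right_ext c F)) \<le> op_norm a * l2_norm (right_ext c F)"
    by (rule L_l2_bound(2)[OF assms(1) R_l2_bound(1)[OF assms(2,3)]])
  also have "\<dots> \<le> op_norm a * (op_norm c * l2_norm F)"
    by (rule mult_left_mono[OF R_l2_bound(2)[OF assms(2,3)] op_norm_nonneg[OF assms(1)]])
  finally show ?thesis by (simp add: mult.assoc)
qed
lemma op_norm_zero: assumes "\<And>f. f \<in> l2 \<Longrightarrow> x f = (\<lambda>_. 0)" shows "op_norm x = 0"
proof -
  have "{l2_norm (x f) |f. f \<in> l2 \<and> l2_norm f \<le> 1} = {0}"
  proof
    show "{l2_norm (x f) |f. f \<in> l2 \<and> l2_norm f \<le> 1} \<subseteq> {0}" using assms by auto
    have "(\<lambda>_. 0) \<in> l2 \<and> l2_norm (\<lambda>_. 0::complex) \<le> 1 \<and> l2_norm (x (\<lambda>_. 0)) = 0"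
      using assms[of "\<lambda>_. 0"] by simp
    thus "{0} \<subseteq> {l2_norm (x f) |f. f \<in> l2 \<and> l2_norm f \<le> 1}" by force
  qed
  thus ?thesis unfolding op_norm_def by simp
qed

lemma main_bound:
  fixes xs :: "nat \<Rightarrow> 'i op" and ys :: "nat \<Rightarrow> 'j op" and F :: "'i \<times> 'j \<Rightarrow> complex"
  assumes sx: "\<And>i. i < m \<Longrightarrow> self_adjoint (xs i) \<and> contraction (xs i)"
    and sy: "\<And>i. i < m \<Longrightarrow> self_adjoint (ys i) \<and> contraction (ys i)"
    and F: "F \<in> l2"
  defines "K \<equiv> real m + 1/2 *
           (\<Sum>j<m. \<Sum>i<j.
              op_norm (commutator (xs i) (xs j)) * op_norm (commutator (ys i) (ys j))
            + op_norm (anticommutator (xs i) (xs j)) * op_norm (anticommutator (ys i) (ys j)))"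
  shows "(l2_norm (op_sum m (\<lambda>i. tensor_op (xs i) (ys i)) F))\<^sup>2 \<le> K * (l2_norm F)\<^sup>2"
proof -
  have sax: "self_adjoint (xs k)" and bx: "bounded_op (xs k)" and nx: "op_norm (xs k) \<le> 1" if "k < m" for k
    using sx[OF that] by (auto simp: contraction_def sa_bounded)
  have say: "self_adjoint (ys k)" and bY: "bounded_op (ys k)" and ny: "op_norm (ys k) \<le> 1" if "k < m" for k
    using sy[OF that] by (auto simp: contraction_def sa_bounded)
  define T where "T = (\<lambda>k. tensor_op (xs k) (ys k))"
  define B where "B = op_sum m T"
  have Bapp: "B G = (\<lambda>p. \<Sum>k\<in>{..<m}. T k G p)" for G by (simp add: B_def op_sum_def)
  have bT: "bounded_op (T k)" if "k < m" for k unfolding T_def by (rule bounded_op_T[OF bx[OF that] bY[OF that]])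
  have bB: "bounded_op B" unfolding B_def op_sum_def by (rule bounded_op_sum) (auto intro: bT)
  have BF: "B F \<in> l2" by (rule bop_l2[OF bB F])
  have BBF: "B (B F) \<in> l2" by (rule bop_l2[OF bB BF])
  have Bsa: "l2_inner (B G) H = l2_inner G (B H)" if G: "G \<in> l2" and H: "H \<in> l2" for G H
  proof -
    have "l2_inner (B G) H = (\<Sum>k\<in>{..<m}. l2_inner (T k G) H)"
      unfolding Bapp by (rule l2_inner_sum_left) (auto intro: bop_l2[OF bT G] H)
    also have "\<dots> = (\<Sum>k\<in>{..<m}. l2_inner G (T k H))"
      by (rule sum.cong) (auto simp: T_def intro: T_sa[OF sax say G H])
    also have "\<dots> = l2_inner G (B H)"
      unfolding Bapp by (rule l2_inner_sum_right[symmetric]) (auto intro: bop_l2[OF bT H] G)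
    finally show ?thesis .
  qed
  have sq: "(l2_norm (B F))\<^sup>2 \<le> l2_norm F * l2_norm (B (B F))"
  proof -
    have "complex_of_real ((l2_norm (B F))\<^sup>2) = l2_inner F (B (B F))"
      using l2_inner_self[OF BF] Bsa[OF F BF] by simp
    hence "(l2_norm (B F))\<^sup>2 = cmod (l2_inner F (B (B F)))"
      by (metis abs_of_nonneg norm_of_real zero_le_power2)
    also have "\<dots> \<le> l2_norm F * l2_norm (B (B F))" by (rule l2_cs[OF F BBF])
    finally show ?thesis .
  qed
  define P where "P = (\<lambda>k l. left_ext (xs k) (left_ext (xs l) (right_ext (ys k) (right_ext (ys l) F))))"
  define Qc where "Qc = (\<lambda>i j. left_ext (commutator (xs i) (xs j)) (right_ext (commutator (ys i) (ys j)) F))"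
  define Qa where "Qa = (\<lambda>i j. left_ext (anticommutator (xs i) (xs j)) (right_ext (anticommutator (ys i) (ys j)) F))"
  define E where "E = (\<lambda>j i p. (1/2) * (Qc i j p + Qa i j p))"
  have TF: "T l F \<in> l2" if "l < m" for l by (rule bop_l2[OF bT[OF that] F])
  have TT: "T k (T l F) = P k l" if "k < m" "l < m" for k l
  proof -
    have R1: "right_ext (ys l) F \<in> l2" by (rule R_l2_bound(1)[OF bY[OF that(2)] F])
    show ?thesis unfolding T_def P_def tensor_op_def o_def
      using LR_comm[OF sax[OF that(2)] say[OF that(1)] R1] by simp
  qed
  have TBF: "T k (B F) = (\<lambda>p. \<Sum>l\<in>{..<m}. T k (T l F) p)" if "k < m" for k
    unfolding Bapp[of F] by (rule bop_sum[OF bT[OF that]]) (auto intro: TF)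
  have BB: "B (B F) = (\<lambda>p. \<Sum>k<m. \<Sum>l<m. P k l p)"
  proof
    fix p
    have "B (B F) p = (\<Sum>k<m. T k (B F) p)" by (simp add: Bapp[of "B F"])
    also have "\<dots> = (\<Sum>k<m. \<Sum>l<m. T k (T l F) p)" by (rule sum.cong) (auto simp: TBF)
    also have "\<dots> = (\<Sum>k<m. \<Sum>l<m. P k l p)" by (rule sum.cong, simp, rule sum.cong) (auto simp: TT)
    finally show "B (B F) p = (\<Sum>k<m. \<Sum>l<m. P k l p)" .
  qed
  have PE: "P i j p + P j i p = E j i p" if "i < m" "j < m" for i j p
    unfolding P_def E_def Qc_def Qa_def
    by (rule PQ_lemma[OF bx[OF that(1)] bx[OF that(2)] bY[OF that(1)] bY[OF that(2)] F])
  define D where "D = (\<lambda>p. \<Sum>k<m. P k k p)"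
  have BB2: "B (B F) = (\<lambda>p. D p + (\<Sum>j<m. \<Sum>i<j. E j i p))"
  proof
    fix p
    have "B (B F) p = (\<Sum>k<m. P k k p) + (\<Sum>j<m. \<Sum>i<j. P i j p + P j i p)"
      unfolding BB by (rule sum_square_split)
    also have "\<dots> = D p + (\<Sum>j<m. \<Sum>i<j. E j i p)"
      unfolding D_def by (auto intro!: sum.cong PE)
    finally show "B (B F) p = D p + (\<Sum>j<m. \<Sum>i<j. E j i p)" .
  qed
  have Pl2: "P k k \<in> l2" and Pn: "l2_norm (P k k) \<le> l2_norm F" if "k < m" for k
  proof -
    have r1: "right_ext (ys k) F \<in> l2" by (rule R_l2_bound(1)[OF bY[OF that] F])
    have r2: "right_ext (ys k) (right_ext (ys k) F) \<in> l2" by (rule R_l2_bound(1)[OF bY[OF that] r1])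
    have l1: "left_ext (xs k) (right_ext (ys k) (right_ext (ys k) F)) \<in> l2" by (rule L_l2_bound(1)[OF bx[OF that] r2])
    show "P k k \<in> l2" unfolding P_def by (rule L_l2_bound(1)[OF bx[OF that] l1])
    have "l2_norm (P k k) \<le> l2_norm (left_ext (xs k) (right_ext (ys k) (right_ext (ys k) F)))"
      unfolding P_def by (rule contr_L[OF bx[OF that] nx[OF that] l1])
    also have "\<dots> \<le> l2_norm (right_ext (ys k) (right_ext (ys k) F))"
      by (rule contr_L[OF bx[OF that] nx[OF that] r2])
    also have "\<dots> \<le> l2_norm (right_ext (ys k) F)"
      by (rule contr_R[OF bY[OF that] ny[OF that] r1])
    also have "\<dots> \<le> l2_norm F"
      by (rule contr_R[OF bY[OF that] ny[OF that] F])
    finally show "l2_norm (P k k) \<le> l2_norm F" .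
  qed
  define cc where "cc = (\<lambda>i j. op_norm (commutator (xs i) (xs j)) * op_norm (commutator (ys i) (ys j)))"
  define aa where "aa = (\<lambda>i j. op_norm (anticommutator (xs i) (xs j)) * op_norm (anticommutator (ys i) (ys j)))"
  have El2: "E j i \<in> l2" and En: "l2_norm (E j i) \<le> (1/2) * (cc i j + aa i j) * l2_norm F"
    if "i < m" "j < m" for i j
  proof -
    have bc1: "bounded_op (commutator (xs i) (xs j))" by (rule bounded_op_commutator[OF bx[OF that(1)] bx[OF that(2)]])
    have bc2: "bounded_op (commutator (ys i) (ys j))" by (rule bounded_op_commutator[OF bY[OF that(1)] bY[OF that(2)]])
    have ba1: "bounded_op (anticommutator (xs i) (xs j))" by (rule bounded_op_anticommutator[OF bx[OF that(1)] bx[OF that(2)]])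
    have ba2: "bounded_op (anticommutator (ys i) (ys j))" by (rule bounded_op_anticommutator[OF bY[OF that(1)] bY[OF that(2)]])
    have qc: "Qc i j \<in> l2" unfolding Qc_def by (rule L_l2_bound(1)[OF bc1 R_l2_bound(1)[OF bc2 F]])
    have qa: "Qa i j \<in> l2" unfolding Qa_def by (rule L_l2_bound(1)[OF ba1 R_l2_bound(1)[OF ba2 F]])
    have E': "E j i = (\<lambda>p. complex_of_real (1/2) * (\<lambda>p. Qc i j p + Qa i j p) p)" by (simp add: E_def)
    show "E j i \<in> l2" unfolding E' by (rule l2_scale(1)[OF l2_add[OF qc qa]])
    have "l2_norm (E j i) = (1/2) * l2_norm (\<lambda>p. Qc i j p + Qa i j p)"
      unfolding E' l2_scale(2)[OF l2_add[OF qc qa]] by simp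
    also have "\<dots> \<le> (1/2) * (l2_norm (Qc i j) + l2_norm (Qa i j))"
      by (rule mult_left_mono[OF l2_triangle[OF qc qa]]) simp
    also have "\<dots> \<le> (1/2) * (cc i j * l2_norm F + aa i j * l2_norm F)"
      unfolding Qc_def Qa_def cc_def aa_def
      by (rule mult_left_mono[OF add_mono[OF LR_bound[OF bc1 bc2 F] LR_bound[OF ba1 ba2 F]]]) simp
    also have "\<dots> = (1/2) * (cc i j + aa i j) * l2_norm F" by (simp add: algebra_simps)
    finally show "l2_norm (E j i) \<le> (1/2) * (cc i j + aa i j) * l2_norm F" .
  qed
  have Dl2: "D \<in> l2" unfolding D_def by (rule l2_sum) (auto intro: Pl2)
  have Dn: "l2_norm D \<le> real m * l2_norm F"
  proof -
    have "l2_norm D \<le> (\<Sum>k<m. l2_norm (P k k))" unfolding D_def by (rule l2_norm_sum) (auto intro: Pl2)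
    also have "\<dots> \<le> (\<Sum>k<m. l2_norm F)" by (rule sum_mono) (auto intro: Pn)
    finally show ?thesis by simp
  qed
  have Ej: "(\<lambda>p. \<Sum>i<j. E j i p) \<in> l2" if "j < m" for j by (rule l2_sum) (use that in \<open>auto intro: El2\<close>)
  have Esl2: "(\<lambda>p. \<Sum>j<m. \<Sum>i<j. E j i p) \<in> l2" by (rule l2_sum) (auto intro: Ej)
  have Esn: "l2_norm (\<lambda>p. \<Sum>j<m. \<Sum>i<j. E j i p) \<le> (\<Sum>j<m. \<Sum>i<j. (1/2) * (cc i j + aa i j) * l2_norm F)"
  proof -
    have "l2_norm (\<lambda>p. \<Sum>j<m. \<Sum>i<j. E j i p) \<le> (\<Sum>j<m. l2_norm (\<lambda>p. \<Sum>i<j. E j i p))"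
      by (rule l2_norm_sum) (auto intro: Ej)
    also have "\<dots> \<le> (\<Sum>j<m. \<Sum>i<j. l2_norm (E j i))"
      by (rule sum_mono, rule l2_norm_sum) (auto intro: El2)
    also have "\<dots> \<le> (\<Sum>j<m. \<Sum>i<j. (1/2) * (cc i j + aa i j) * l2_norm F)"
      by (rule sum_mono, rule sum_mono, rule En) auto
    finally show ?thesis .
  qed
  have Keq: "real m * l2_norm F + (\<Sum>j<m. \<Sum>i<j. (1/2) * (cc i j + aa i j) * l2_norm F) = K * l2_norm F"
  proof -
    have S: "(\<Sum>j<m. \<Sum>i<j. (1/2) * (cc i j + aa i j) * l2_norm F) = (1/2) * (\<Sum>j<m. \<Sum>i<j. cc i j + aa i j) * l2_norm F"
      by (simp add: sum_distrib_left sum_distrib_right mult.assoc)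
    have K: "K = real m + 1/2 * (\<Sum>j<m. \<Sum>i<j. cc i j + aa i j)"
      unfolding K_def cc_def aa_def by simp
    show ?thesis unfolding S K by (simp add: algebra_simps)
  qed
  have BBn: "l2_norm (B (B F)) \<le> K * l2_norm F"
  proof -
    have "l2_norm (B (B F)) \<le> l2_norm D + l2_norm (\<lambda>p. \<Sum>j<m. \<Sum>i<j. E j i p)"
      unfolding BB2 by (rule l2_triangle[OF Dl2 Esl2])
    also have "\<dots> \<le> real m * l2_norm F + (\<Sum>j<m. \<Sum>i<j. (1/2) * (cc i j + aa i j) * l2_norm F)"
      by (rule add_mono[OF Dn Esn])
    also have "\<dots> = K * l2_norm F" by (rule Keq)
    finally show ?thesis .
  qed
  have "(l2_norm (B F))\<^sup>2 \<le> l2_norm F * (K * l2_norm F)"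
    using sq mult_left_mono[OF BBn l2_norm_nonneg[of F]] by linarith
  also have "\<dots> = K * (l2_norm F)\<^sup>2" by (simp add: power2_eq_square mult_ac)
  finally show ?thesis by (simp add: B_def T_def)
qed

theorem theorem2p1:
  fixes xs :: "nat \<Rightarrow> 'i op" and ys :: "nat \<Rightarrow> 'j op" and m :: nat
  assumes "m \<ge> 1"
    and "\<And>i. i < m \<Longrightarrow> self_adjoint (xs i) \<and> contraction (xs i)"
    and "\<And>i. i < m \<Longrightarrow> self_adjoint (ys i) \<and> contraction (ys i)"
  shows "((op_norm (op_sum m (\<lambda>i. tensor_op (xs i) (ys i))))\<^sup>2 \<le> real m + 1/2 *
           (\<Sum>j<m. \<Sum>i<j.
              op_norm (commutator (xs i) (xs j)) * op_norm (commutator (ys i) (ys j))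
            + op_norm (anticommutator (xs i) (xs j)) * op_norm (anticommutator (ys i) (ys j))))
     \<and> ((\<forall>j<m. \<forall>i<j. (\<forall>f\<in>l2. anticommutator (xs i) (xs j) f = (\<lambda>_. 0))
                       \<or> (\<forall>f\<in>l2. anticommutator (ys i) (ys j) f = (\<lambda>_. 0))) \<longrightarrow>
         (op_norm (op_sum m (\<lambda>i. tensor_op (xs i) (ys i))))\<^sup>2 \<le> real m + 1/2 *
           (\<Sum>j<m. \<Sum>i<j.
              op_norm (commutator (xs i) (xs j)) * op_norm (commutator (ys i) (ys j))))"
proof -
  define K where "K = real m + 1/2 *
           (\<Sum>j<m. \<Sum>i<j.
              op_norm (commutator (xs i) (xs j)) * op_norm (commutator (ys i) (ys j))
            + op_norm (anticommutator (xs i) (xs j)) * op_norm (anticommutator (ys i) (ys j)))"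
  define B where "B = op_sum m (\<lambda>i. tensor_op (xs i) (ys i))"
  have bx: "bounded_op (xs k)" if "k < m" for k using assms(2)[OF that] by (simp add: sa_bounded)
  have bY: "bounded_op (ys k)" if "k < m" for k using assms(3)[OF that] by (simp add: sa_bounded)
  have K0: "0 \<le> K" unfolding K_def
    by (intro add_nonneg_nonneg mult_nonneg_nonneg sum_nonneg op_norm_nonneg bounded_op_commutator
        bounded_op_anticommutator bx bY) auto
  have bB: "bounded_op B" unfolding B_def op_sum_def
    by (rule bounded_op_sum) (auto intro: bounded_op_T bx bY)
  have "op_norm B \<le> sqrt K"
  proof (rule op_norm_le)
    fix f :: "'i \<times> 'j \<Rightarrow> complex" assume f: "f \<in> l2" and f1: "l2_norm f \<le> 1"
    have "(l2_norm (B f))\<^sup>2 \<le> K * (l2_norm f)\<^sup>2"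
      unfolding B_def K_def by (rule main_bound[OF assms(2,3) f])
    also have "\<dots> \<le> K * 1"
      by (rule mult_left_mono[OF _ K0]) (use f1 l2_norm_nonneg[of f] in \<open>simp add: power_le_one\<close>)
    finally have "(l2_norm (B f))\<^sup>2 \<le> K" by simp
    thus "l2_norm (B f) \<le> sqrt K" by (rule real_le_rsqrt)
  qed
  hence part1: "(op_norm B)\<^sup>2 \<le> K"
    using op_norm_nonneg[OF bB] K0 by (metis power_mono real_sqrt_pow2)
  moreover have "(op_norm B)\<^sup>2 \<le> real m + 1/2 *
           (\<Sum>j<m. \<Sum>i<j. op_norm (commutator (xs i) (xs j)) * op_norm (commutator (ys i) (ys j)))"
    if hyp: "\<forall>j<m. \<forall>i<j. (\<forall>f\<in>l2. anticommutator (xs i) (xs j) f = (\<lambda>_. 0))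
                       \<or> (\<forall>f\<in>l2. anticommutator (ys i) (ys j) f = (\<lambda>_. 0))"
  proof -
    have z: "op_norm (anticommutator (xs i) (xs j)) * op_norm (anticommutator (ys i) (ys j)) = 0"
      if "j < m" "i < j" for i j
      using hyp that op_norm_zero[of "anticommutator (xs i) (xs j)"] op_norm_zero[of "anticommutator (ys i) (ys j)"]
      by auto
    have "K = real m + 1/2 *
           (\<Sum>j<m. \<Sum>i<j. op_norm (commutator (xs i) (xs j)) * op_norm (commutator (ys i) (ys j)))"
      unfolding K_def using z by (auto intro!: sum.cong)
    thus ?thesis using part1 by simp
  qed
  ultimately show ?thesis unfolding B_def K_def by blast
qed


end
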